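(* Let $d,n\ge1$ be integers and let $X=I_1\cup\dots\cup I_d$ be the disjoint union of $d$ copies $I_1,\dots,I_d$ of the unit interval $[0,1]$. Let $H$ be the (infinite) family of all sets $e=e^1\cup\dots\cup e^d\subseteq X$, with each $e^j$ empty or a closed interval in $I_j$, whose total length $|e|=\sum_j|e^j|$ satisfies $|e|>\frac1n$. Then: (1) every set $C\subseteq X$ meeting every member of $H$ satisfies $|C|\ge nd^2-d$; (2) for every finitely supported function $\alpha:H\to\mathbb{R}_{\ge0}$ such that $\sum_{e\in H,\,x\in e}\alpha(e)\le1$ for every $x\in X$, one has $\sum_{e\in H}\alpha(e)< nd$ (when $\alpha\not\equiv0$) and in any case $\sum_{e}\alpha(e)\le nd$.
   Context: $|e^j|$ denotes the length of the interval $e^j$ (zero if empty). *)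

theory Defs
  imports Complex_Main
begin

text \<open>The space X: d disjoint copies of [0,1]; copy j (0 \<le> j < d) is {j} \<times> [0,1].\<close>
definition copies :: "nat \<Rightarrow> (nat \<times> real) set" where
  "copies d = {..<d} \<times> {0..1}"

definition slice :: "(nat \<times> real) set \<Rightarrow> nat \<Rightarrow> real set" where
  "slice e j = {t. (j, t) \<in> e}"

definition closed_ivl_or_empty :: "real set \<Rightarrow> bool" where
  "closed_ivl_or_empty S \<longleftrightarrow> S = {} \<or> (\<exists>a b. 0 \<le> a \<and> a \<le> b \<and> b \<le> 1 \<and> S = {a..b})"

definition ivl_len :: "real set \<Rightarrow> real" where
  "ivl_len S = (if S = {} then 0 else Sup S - Inf S)"

definition tot_len :: "nat \<Rightarrow> (nat \<times> real) set \<Rightarrow> real" where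
  "tot_len d e = (\<Sum>j<d. ivl_len (slice e j))"

definition edges :: "nat \<Rightarrow> nat \<Rightarrow> (nat \<times> real) set set" where
  "edges d n = {e. e \<subseteq> copies d \<and> (\<forall>j<d. closed_ivl_or_empty (slice e j))
                   \<and> tot_len d e > 1 / real n}"

end

theory Submission imports Defs "HOL-Analysis.Analysis" begin

lemma ivl_len_atLeastAtMost: "(a::real) \<le> b \<Longrightarrow> ivl_len {a..b} = b - a"
  by (simp add: ivl_len_def)

lemma ivl_int:
  assumes "closed_ivl_or_empty X"
  shows "(indicator X has_integral ivl_len X) {0..1::real}"
proof (cases "X = {}")
  case True
  have "indicator {} = (\<lambda>x::real. 0::real)" by (rule ext) simp
  thus ?thesis using True by (simp add: ivl_len_def)
next
  case False
  then obtain a b where ab: "0 \<le> a" "a \<le> b" "b \<le> 1" "X = {a..b}"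
    using assms closed_ivl_or_empty_def by blast
  have "((\<lambda>x. if x \<in> X then (1::real) else 0) has_integral (b - a)) {0..1}"
    apply (subst has_integral_restrict)
    using ab apply auto[1]
    using has_integral_const_real[of "1::real" a b] ab by simp
  moreover have "indicator X = (\<lambda>x::real. if x \<in> X then 1::real else 0)" by (rule ext) (simp add: indicator_def)
  ultimately show ?thesis using ab by (simp add: ivl_len_atLeastAtMost)
qed

lemma gap_lemma:
  fixes K :: "real set"
  assumes "finite K"
  shows "\<And>u v L. u < v \<Longrightarrow> card (K \<inter> {u<..<v}) \<le> k \<Longrightarrow> 0 \<le> L
     \<Longrightarrow> L < (v - u) / (card (K \<inter> {u<..<v}) + 1)
     \<Longrightarrow> \<exists>a b. u < a \<and> a \<le> b \<and> b < v \<and> b - a \<ge> L \<and> {a..b} \<inter> K = {}"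
proof (induction k)
  case 0
  hence e: "K \<inter> {u<..<v} = {}" using assms by auto
  define \<eta> where "\<eta> = (v - u - L) / 2"
  have "\<eta> > 0" using 0 e by (simp add: \<eta>_def)
  show ?case
    apply (rule exI[of _ "u + \<eta>"], rule exI[of _ "v - \<eta>"])
  proof (intro conjI)
    show "{u + \<eta>..v - \<eta>} \<inter> K = {}"
    proof (rule ccontr)
      assume "{u + \<eta>..v - \<eta>} \<inter> K \<noteq> {}"
      then obtain x where "x \<in> K" "u + \<eta> \<le> x" "x \<le> v - \<eta>" by auto
      thus False using e \<open>\<eta> > 0\<close> by auto
    qed
  qed (use 0 \<open>\<eta> > 0\<close> in \<open>auto simp: \<eta>_def field_simps\<close>)
next
  case (Suc k u v L)
  show ?case
  proof (cases "K \<inter> {u<..<v} = {}")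
    case True
    thus ?thesis using Suc.IH[of u v L] Suc.prems by simp
  next
    case False
    then obtain p where p: "p \<in> K" "u < p" "p < v" by auto
    define c1 where "c1 = card (K \<inter> {u<..<p})"
    define c2 where "c2 = card (K \<inter> {p<..<v})"
    have eq: "K \<inter> {u<..<v} = ((K \<inter> {u<..<p}) \<union> (K \<inter> {p<..<v})) \<union> {p}"
      using p by auto
    have "card (K \<inter> {u<..<v}) = card ((K \<inter> {u<..<p}) \<union> (K \<inter> {p<..<v})) + card {p}"
      unfolding eq by (rule card_Un_disjoint) (use assms in auto)
    also have "card ((K \<inter> {u<..<p}) \<union> (K \<inter> {p<..<v})) = c1 + c2"
      unfolding c1_def c2_def by (rule card_Un_disjoint) (use assms in auto)
    finally have "card (K \<inter> {u<..<v}) = c1 + c2 + 1" by simp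
    hence c12: "c1 + c2 \<le> k" and cc: "card (K \<inter> {u<..<v}) = c1 + c2 + 1" using Suc.prems by simp_all
    have "L < (p - u) / (c1 + 1) \<or> L < (v - p) / (c2 + 1)"
    proof (rule ccontr)
      assume "\<not> ?thesis"
      hence "p - u \<le> L * (c1 + 1)" "v - p \<le> L * (c2 + 1)"
        by (auto simp: field_simps)
      hence "v - u \<le> L * (c1 + c2 + 2)" by (simp add: algebra_simps)
      thus False using Suc.prems cc by (simp add: field_simps)
    qed
    thus ?thesis
    proof
      assume h: "L < (p - u) / (c1 + 1)"
      obtain a b where "u < a \<and> a \<le> b \<and> b < p \<and> b - a \<ge> L \<and> {a..b} \<inter> K = {}"
        using Suc.IH[of u p L] h c12 p Suc.prems unfolding c1_def by auto
      thus ?thesis using p by (meson order.strict_trans)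
    next
      assume h: "L < (v - p) / (c2 + 1)"
      obtain a b where "p < a \<and> a \<le> b \<and> b < v \<and> b - a \<ge> L \<and> {a..b} \<inter> K = {}"
        using Suc.IH[of p v L] h c12 p Suc.prems unfolding c2_def by auto
      thus ?thesis using p by (meson order.strict_trans)
    qed
  qed
qed


lemma part2_sum:
  fixes \<alpha> :: "(nat \<times> real) set \<Rightarrow> real" and d n :: nat
  defines "S \<equiv> {e\<in>edges d n. \<alpha> e \<noteq> 0}"
  assumes fin: "finite S"
    and cons: "\<forall>x\<in>copies d. (\<Sum>e\<in>{e\<in>edges d n. x \<in> e \<and> \<alpha> e \<noteq> 0}. \<alpha> e) \<le> 1"
  shows "(\<Sum>e\<in>S. \<alpha> e * tot_len d e) \<le> real d"
proof -
  have j: "(\<Sum>e\<in>S. \<alpha> e * ivl_len (slice e j)) \<le> 1" if jd: "j < d" for j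
  proof -
    define f where "f t = (\<Sum>e\<in>S. \<alpha> e * indicator (slice e j) t)" for t :: real
    have "(f has_integral (\<Sum>e\<in>S. \<alpha> e * ivl_len (slice e j))) {0..1}"
      unfolding f_def
    proof (rule has_integral_sum[OF fin])
      fix e assume "e \<in> S"
      hence "closed_ivl_or_empty (slice e j)" using jd by (auto simp: S_def edges_def)
      thus "((\<lambda>t. \<alpha> e * indicator (slice e j) t) has_integral \<alpha> e * ivl_len (slice e j)) {0..1}"
        by (intro has_integral_mult_right ivl_int)
    qed
    moreover have "((\<lambda>_. 1::real) has_integral 1) {0..1::real}"
      using has_integral_const_real[of "1::real" 0 1] by simp
    moreover have "f t \<le> 1" if t: "t \<in> {0..1}" for t
    proof -
      have "f t = (\<Sum>e\<in>S. if (j, t) \<in> e then \<alpha> e else 0)"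
        unfolding f_def by (intro sum.cong) (auto simp: slice_def indicator_def)
      also have "\<dots> = (\<Sum>e\<in>{e\<in>S. (j,t) \<in> e}. \<alpha> e)"
        by (rule sum.inter_filter[symmetric, OF fin])
      also have "{e\<in>S. (j,t) \<in> e} = {e\<in>edges d n. (j,t) \<in> e \<and> \<alpha> e \<noteq> 0}"
        by (auto simp: S_def)
      also have "(\<Sum>e\<in>\<dots>. \<alpha> e) \<le> 1"
        using cons t jd by (auto simp: copies_def)
      finally show ?thesis .
    qed
    ultimately show ?thesis by (rule has_integral_le)
  qed
  have "(\<Sum>e\<in>S. \<alpha> e * tot_len d e) = (\<Sum>j<d. \<Sum>e\<in>S. \<alpha> e * ivl_len (slice e j))"
    unfolding tot_len_def sum_distrib_left by (rule sum.swap)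
  also have "\<dots> \<le> (\<Sum>j<d. 1)" by (rule sum_mono) (use j in auto)
  finally show ?thesis by simp
qed

lemma cs:
  fixes x :: "nat \<Rightarrow> real"
  assumes "\<And>j. x j > 0"
  shows "real d ^ 2 \<le> (\<Sum>j<d. x j) * (\<Sum>j<d. 1 / x j)"
proof -
  have "(\<Sum>j<d. sqrt (x j) * (1 / sqrt (x j)))\<^sup>2 \<le> (\<Sum>j<d. (sqrt (x j))\<^sup>2) * (\<Sum>j<d. (1 / sqrt (x j))\<^sup>2)"
    by (rule Cauchy_Schwarz_ineq_sum)
  moreover have "\<And>j. sqrt (x j) * (1 / sqrt (x j)) = 1" using assms
    by (simp add: less_imp_neq[symmetric])
  moreover have "\<And>j. (sqrt (x j))\<^sup>2 = x j" using assms by (simp add: less_imp_le)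
  moreover have "\<And>j. (1 / sqrt (x j))\<^sup>2 = 1 / x j" using assms by (simp add: less_imp_le power_divide)
  ultimately show ?thesis by simp
qed


lemma part1:
  fixes d n :: nat
  assumes d1: "d \<ge> 1" and n1: "n \<ge> 1"
    and Cs: "C \<subseteq> copies d" and hit: "\<forall>e\<in>edges d n. C \<inter> e \<noteq> {}" and finC: "finite C"
  shows "card C \<ge> n * d ^ 2 - d"
proof -
  define K where "K j = slice C j" for j
  have finK: "finite (K j)" for j
  proof -
    have "K j \<subseteq> snd ` C" by (force simp: K_def slice_def)
    thus ?thesis using finC finite_surj by blast
  qed
  define k where "k j = card (K j)" for j
  have CS: "C = Sigma {..<d} K" using Cs by (auto simp: K_def slice_def copies_def)
  have cardC: "card C = (\<Sum>j<d. k j)" unfolding CS k_def by (rule card_SigmaI) (use finK in auto)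
  define \<Sigma> where "\<Sigma> = (\<Sum>j<d. 1 / (real (k j) + 1))"
  have le: "\<Sigma> \<le> 1 / real n"
  proof (rule ccontr)
    assume "\<not> ?thesis"
    hence gt: "\<Sigma> > 1 / real n" by simp
    define \<delta> where "\<delta> = (\<Sigma> - 1 / real n) / (2 * real d)"
    have \<delta>0: "\<delta> > 0" using gt d1 by (simp add: \<delta>_def)
    define L where "L j = max 0 (1 / (real (k j) + 1) - \<delta>)" for j
    have "\<forall>j\<in>{..<d}. \<exists>ab. 0 < fst ab \<and> fst ab \<le> snd ab \<and> snd ab < 1 \<and> snd ab - fst ab \<ge> L j
             \<and> {fst ab..snd ab} \<inter> K j = {}"
    proof
      fix j assume "j \<in> {..<d}"
      have c: "card (K j \<inter> {0<..<1}) \<le> k j" unfolding k_def by (rule card_mono[OF finK]) auto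
      have "1 / (real (k j) + 1) \<le> 1 / (real (card (K j \<inter> {0<..<1})) + 1)"
        using c by (intro divide_left_mono) auto
      moreover have "L j < 1 / (real (k j) + 1)" using \<delta>0 by (simp add: L_def)
      ultimately have "L j < (1 - 0) / real (card (K j \<inter> {0<..<1}) + 1)" by (simp add: add.commute)
      from gap_lemma[OF finK _ order.refl _ this] obtain a b where
        "0 < a \<and> a \<le> b \<and> b < 1 \<and> b - a \<ge> L j \<and> {a..b} \<inter> K j = {}"
        by (auto simp: L_def)
      thus "\<exists>ab. 0 < fst ab \<and> fst ab \<le> snd ab \<and> snd ab < 1 \<and> snd ab - fst ab \<ge> L j
             \<and> {fst ab..snd ab} \<inter> K j = {}" by (intro exI[of _ "(a,b)"]) simp
    qed
    then obtain f where f: "\<And>j. j < d \<Longrightarrow> 0 < fst (f j) \<and> fst (f j) \<le> snd (f j) \<and> snd (f j) < 1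
        \<and> snd (f j) - fst (f j) \<ge> L j \<and> {fst (f j)..snd (f j)} \<inter> K j = {}"
      using bchoice by (metis lessThan_iff)
    define e where "e = {(j, t). j < d \<and> fst (f j) \<le> t \<and> t \<le> snd (f j)}"
    have sl: "slice e j = {fst (f j)..snd (f j)}" if "j < d" for j
      using that by (auto simp: e_def slice_def)
    have "e \<in> edges d n"
      unfolding edges_def
    proof (intro CollectI conjI allI impI)
      show "e \<subseteq> copies d" using f by (force simp: e_def copies_def)
      fix j assume "j < d"
      thus "closed_ivl_or_empty (slice e j)" using f[of j] sl[of j]
        by (auto simp: closed_ivl_or_empty_def)
    next
      have "tot_len d e = (\<Sum>j<d. snd (f j) - fst (f j))"
        unfolding tot_len_def by (rule sum.cong) (use sl f in \<open>auto simp: ivl_len_atLeastAtMost\<close>)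
      also have "\<dots> \<ge> (\<Sum>j<d. L j)" by (rule sum_mono) (use f in auto)
      also have "(\<Sum>j<d. L j) \<ge> (\<Sum>j<d. 1 / (real (k j) + 1) - \<delta>)"
        by (rule sum_mono) (simp add: L_def)
      also have "(\<Sum>j<d. 1 / (real (k j) + 1) - \<delta>) = \<Sigma> - real d * \<delta>"
        by (simp add: sum_subtractf \<Sigma>_def)
      also have "\<Sigma> - real d * \<delta> = (\<Sigma> + 1 / real n) / 2"
        using d1 by (simp add: \<delta>_def field_simps)
      finally have "(\<Sigma> + 1 / real n) / 2 \<le> tot_len d e" .
      thus "tot_len d e > 1 / real n" using gt by (simp add: field_simps)
    qed
    moreover have "C \<inter> e = {}"
    proof (rule ccontr)
      assume "C \<inter> e \<noteq> {}"
      then obtain j t where "(j,t) \<in> C" "j < d" "fst (f j) \<le> t" "t \<le> snd (f j)"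
        by (auto simp: e_def)
      thus False using f[of j] by (auto simp: K_def slice_def)
    qed
    ultimately show False using hit by blast
  qed
  have "real d ^ 2 \<le> (\<Sum>j<d. real (k j) + 1) * \<Sigma>"
    unfolding \<Sigma>_def by (rule cs) simp
  also have "\<dots> \<le> (\<Sum>j<d. real (k j) + 1) * (1 / real n)"
    by (rule mult_left_mono[OF le]) (simp add: sum_nonneg)
  finally have "real n * real d ^ 2 \<le> (\<Sum>j<d. real (k j) + 1)"
    using n1 by (simp add: field_simps)
  also have "\<dots> = real (card C + d)" by (simp add: cardC sum.distrib)
  finally have "n * d ^ 2 \<le> card C + d" by (simp flip: of_nat_power of_nat_mult)
  thus ?thesis by simp
qed

theorem mainTheorem15:
  fixes d n :: nat
  assumes "d \<ge> 1" and "n \<ge> 1"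
  shows "(\<forall>C. C \<subseteq> copies d \<and> (\<forall>e\<in>edges d n. C \<inter> e \<noteq> {})
            \<longrightarrow> infinite C \<or> card C \<ge> n * d ^ 2 - d)
       \<and> (\<forall>\<alpha> :: (nat \<times> real) set \<Rightarrow> real.
            (\<forall>e\<in>edges d n. \<alpha> e \<ge> 0)
            \<and> finite {e\<in>edges d n. \<alpha> e \<noteq> 0}
            \<and> (\<forall>x\<in>copies d. (\<Sum>e\<in>{e\<in>edges d n. x \<in> e \<and> \<alpha> e \<noteq> 0}. \<alpha> e) \<le> 1)
            \<longrightarrow> ((\<exists>e\<in>edges d n. \<alpha> e \<noteq> 0)
                   \<longrightarrow> (\<Sum>e\<in>{e\<in>edges d n. \<alpha> e \<noteq> 0}. \<alpha> e) < real (n * d))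
              \<and> (\<Sum>e\<in>{e\<in>edges d n. \<alpha> e \<noteq> 0}. \<alpha> e) \<le> real (n * d))"
proof (intro conjI allI impI)
  fix C assume "C \<subseteq> copies d \<and> (\<forall>e\<in>edges d n. C \<inter> e \<noteq> {})"
  thus "infinite C \<or> card C \<ge> n * d ^ 2 - d" using part1[OF assms] by blast
next
  fix \<alpha> :: "(nat \<times> real) set \<Rightarrow> real"
  assume h: "(\<forall>e\<in>edges d n. \<alpha> e \<ge> 0) \<and> finite {e\<in>edges d n. \<alpha> e \<noteq> 0}
            \<and> (\<forall>x\<in>copies d. (\<Sum>e\<in>{e\<in>edges d n. x \<in> e \<and> \<alpha> e \<noteq> 0}. \<alpha> e) \<le> 1)"
  define S where "S = {e\<in>edges d n. \<alpha> e \<noteq> 0}"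
  have fin: "finite S" using h by (simp add: S_def)
  have B: "(\<Sum>e\<in>S. \<alpha> e * tot_len d e) \<le> real d"
    unfolding S_def by (rule part2_sum) (use h in auto)
  have pos: "\<alpha> e > 0" "tot_len d e > 1 / real n" if "e \<in> S" for e
    using that h by (auto simp: S_def edges_def order.order_iff_strict)
  have strict: "(\<Sum>e\<in>S. \<alpha> e) < real (n * d)" if ne: "S \<noteq> {}"
  proof -
    have "(\<Sum>e\<in>S. \<alpha> e / real n) < (\<Sum>e\<in>S. \<alpha> e * tot_len d e)"
    proof (rule sum_strict_mono_ex1[OF fin])
      show "\<forall>e\<in>S. \<alpha> e / real n \<le> \<alpha> e * tot_len d e"
      proof
        fix e assume "e \<in> S"
        hence "\<alpha> e * (1 / real n) \<le> \<alpha> e * tot_len d e" using pos[of e]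
          by (intro mult_left_mono) auto
        thus "\<alpha> e / real n \<le> \<alpha> e * tot_len d e" by simp
      qed
      obtain e where "e \<in> S" using ne by auto
      hence "\<alpha> e * (1 / real n) < \<alpha> e * tot_len d e" using pos[of e]
        by (intro mult_strict_left_mono) auto
      thus "\<exists>e\<in>S. \<alpha> e / real n < \<alpha> e * tot_len d e" using \<open>e \<in> S\<close> by auto
    qed
    hence "(\<Sum>e\<in>S. \<alpha> e) / real n < real d" using B by (simp add: sum_divide_distrib)
    thus ?thesis using assms by (simp add: field_simps)
  qed
  show "(\<exists>e\<in>edges d n. \<alpha> e \<noteq> 0) \<Longrightarrow> (\<Sum>e\<in>{e\<in>edges d n. \<alpha> e \<noteq> 0}. \<alpha> e) < real (n * d)"
    using strict unfolding S_def by blast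
  show "(\<Sum>e\<in>{e\<in>edges d n. \<alpha> e \<noteq> 0}. \<alpha> e) \<le> real (n * d)"
    using strict unfolding S_def by (cases "{e\<in>edges d n. \<alpha> e \<noteq> 0} = {}") force+
qed

end
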